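(* Let $(\Sigma,E)$ be an algebraic theory with free monad $(T,\eta,\mu)$. For every $T$-semialgebra $\alpha:TX\to X$ and every operation symbol $(\mathsf{op}:n)\in\Sigma$, we have $\alpha\circ\mathsf{op}^{TX}=\alpha\circ\mathsf{op}^{TX}\circ(\eta_X)^n\circ\alpha^n$ as maps $(TX)^n\to X$.
   Context: The free monad $T=T_{\Sigma,E}$ sends a set $X$ to the set $TX$ of $\Sigma$-terms over $X$ modulo the smallest congruence containing all substitution instances of equations of $E$ (class of $t$ written $\overline{t}$); $TX$ is a $(\Sigma,E)$-algebra with $\mathsf{op}^{TX}(\overline{t_1},\dots,\overline{t_n})=\overline{\mathsf{op}(t_1,\dots,t_n)}$; $\eta_X(x)=\overline{x}$; $\mu_X$ flattens terms, $\overline{t[\overline{t_i}/v_i]}\mapsto\overline{t[t_i/v_i]}$. A $T$-semialgebra is a map $\alpha:TX\to X$ with $\alpha\circ\mu_X=\alpha\circ T\alpha$ (the unit law $\alpha\circ\eta_X=\mathrm{id}$ is not required). *)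

theory Defs
  imports Main
begin

text \<open>Signature: operation symbols are the elements of type 'f, with arity ar.
  Terms over variables 'v.\<close>

datatype ('f,'v) trm = Var 'v | Op 'f "('f,'v) trm list"

primrec subst :: "('v \<Rightarrow> ('f,'w) trm) \<Rightarrow> ('f,'v) trm \<Rightarrow> ('f,'w) trm" where
  "subst \<sigma> (Var v) = \<sigma> v"
| "subst \<sigma> (Op f ts) = Op f (map (subst \<sigma>) ts)"

inductive wf :: "('f \<Rightarrow> nat) \<Rightarrow> ('f,'v) trm \<Rightarrow> bool" for ar where
  wf_Var: "wf ar (Var v)"
| wf_Op: "length ts = ar f \<Longrightarrow> (\<forall>t\<in>set ts. wf ar t) \<Longrightarrow> wf ar (Op f ts)"

definition algebraic_theory :: "('f \<Rightarrow> nat) \<Rightarrow> (('f,'v) trm \<times> ('f,'v) trm) set \<Rightarrow> bool" where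
  "algebraic_theory ar E \<longleftrightarrow> (\<forall>(l,r)\<in>E. wf ar l \<and> wf ar r)"

fun vars :: "('f,'v) trm \<Rightarrow> 'v set" where
  "vars (Var v) = {v}"
| "vars (Op f ts) = (\<Union>t\<in>set ts. vars t)"

definition wfV :: "('f \<Rightarrow> nat) \<Rightarrow> 'x set \<Rightarrow> ('f,'x) trm \<Rightarrow> bool" where
  "wfV ar V t \<longleftrightarrow> wf ar t \<and> vars t \<subseteq> V"

inductive econg :: "('f \<Rightarrow> nat) \<Rightarrow> (('f,'v) trm \<times> ('f,'v) trm) set \<Rightarrow> 'x set
    \<Rightarrow> ('f,'x) trm \<Rightarrow> ('f,'x) trm \<Rightarrow> bool" for ar E V where
  ec_refl: "wfV ar V t \<Longrightarrow> econg ar E V t t"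
| ec_sym: "econg ar E V s t \<Longrightarrow> econg ar E V t s"
| ec_trans: "econg ar E V s t \<Longrightarrow> econg ar E V t u \<Longrightarrow> econg ar E V s u"
| ec_op: "length ss = ar f \<Longrightarrow> list_all2 (econg ar E V) ss ts \<Longrightarrow> econg ar E V (Op f ss) (Op f ts)"
| ec_eq: "(l,r) \<in> E \<Longrightarrow> (\<forall>v. wfV ar V (\<sigma> v)) \<Longrightarrow> econg ar E V (subst \<sigma> l) (subst \<sigma> r)"

definition econg_rel :: "('f \<Rightarrow> nat) \<Rightarrow> (('f,'v) trm \<times> ('f,'v) trm) set \<Rightarrow> 'x set \<Rightarrow> (('f,'x) trm \<times> ('f,'x) trm) set" where
  "econg_rel ar E V = {(s,t). econg ar E V s t}"

text \<open>T V for a set V: the set of congruence classes of Sigma-terms over V.\<close>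
definition Ton :: "('f \<Rightarrow> nat) \<Rightarrow> (('f,'v) trm \<times> ('f,'v) trm) set \<Rightarrow> 'x set \<Rightarrow> ('f,'x) trm set set" where
  "Ton ar E V = {t. wfV ar V t} // econg_rel ar E V"

definition TX :: "('f \<Rightarrow> nat) \<Rightarrow> (('f,'v) trm \<times> ('f,'v) trm) set \<Rightarrow> ('f,'x) trm set set" where
  "TX ar E = Ton ar E UNIV"

definition cls :: "('f \<Rightarrow> nat) \<Rightarrow> (('f,'v) trm \<times> ('f,'v) trm) set \<Rightarrow> ('f,'x) trm \<Rightarrow> ('f,'x) trm set" where
  "cls ar E t = econg_rel ar E UNIV `` {t}"

definition rep :: "'a set \<Rightarrow> 'a" where
  "rep C = (SOME t. t \<in> C)"

definition eta :: "('f \<Rightarrow> nat) \<Rightarrow> (('f,'v) trm \<times> ('f,'v) trm) set \<Rightarrow> 'x \<Rightarrow> ('f,'x) trm set" where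
  "eta ar E x = cls ar E (Var x)"

definition mu :: "('f \<Rightarrow> nat) \<Rightarrow> (('f,'v) trm \<times> ('f,'v) trm) set
    \<Rightarrow> ('f, ('f,'x) trm set) trm set \<Rightarrow> ('f,'x) trm set" where
  "mu ar E C = cls ar E (subst rep (rep C))"

definition Tmap :: "('f \<Rightarrow> nat) \<Rightarrow> (('f,'v) trm \<times> ('f,'v) trm) set
    \<Rightarrow> ('a \<Rightarrow> 'b) \<Rightarrow> ('f,'a) trm set \<Rightarrow> ('f,'b) trm set" where
  "Tmap ar E h C = cls ar E (subst (Var \<circ> h) (rep C))"

definition opT :: "('f \<Rightarrow> nat) \<Rightarrow> (('f,'v) trm \<times> ('f,'v) trm) set
    \<Rightarrow> 'f \<Rightarrow> ('f,'x) trm set list \<Rightarrow> ('f,'x) trm set" where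
  "opT ar E f Cs = cls ar E (Op f (map rep Cs))"

text \<open>T-semialgebra: alpha o mu = alpha o T alpha on T(TX) (no unit law); T(TX) = classes of terms over the set TX.\<close>
definition semialgebra :: "('f \<Rightarrow> nat) \<Rightarrow> (('f,'v) trm \<times> ('f,'v) trm) set
    \<Rightarrow> (('f,'x) trm set \<Rightarrow> 'x) \<Rightarrow> bool" where
  "semialgebra ar E \<alpha> \<longleftrightarrow>
     (\<forall>C \<in> Ton ar E (TX ar E). \<alpha> (mu ar E C) = \<alpha> (Tmap ar E \<alpha> C))"

end

theory Submission
  imports Defs
begin

lemma subst_subst: "subst \<tau> (subst \<sigma> t) = subst (subst \<tau> \<circ> \<sigma>) t"
  by (induction t) auto

lemma wf_subst:
  assumes "wf ar t" "vars t \<subseteq> V" "\<forall>v\<in>V. wfV ar W (\<tau> v)"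
  shows "wfV ar W (subst \<tau> t)"
  using assms
proof (induction t rule: wf.induct)
  case (wf_Var v)
  then show ?case by auto
next
  case (wf_Op ts f)
  have "\<forall>t\<in>set ts. wfV ar W (subst \<tau> t)"
  proof
    fix t assume "t \<in> set ts"
    then show "wfV ar W (subst \<tau> t)" using wf_Op by (auto simp: wfV_def)
  qed
  then show ?case using wf_Op(1) by (auto simp: wfV_def intro!: wf.wf_Op)
qed

lemma econg_wfV:
  assumes "algebraic_theory ar E"
  shows "econg ar E V s t \<Longrightarrow> wfV ar V s \<and> wfV ar V t"
proof (induction rule: econg.induct)
  case (ec_op ss f ts)
  then have "length ts = ar f" by (simp add: list_all2_lengthD)
  with ec_op show ?case
    by (auto simp: wfV_def list_all2_conv_all_nth in_set_conv_nth intro!: wf.wf_Op) blast+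
next
  case (ec_eq l r \<sigma>)
  then have "wf ar l" "wf ar r" using assms by (auto simp: algebraic_theory_def)
  then show ?case using ec_eq wf_subst[of ar l UNIV V \<sigma>] wf_subst[of ar r UNIV V \<sigma>]
    by (auto simp: wfV_def)
qed auto

lemma econg_subst:
  "econg ar E V s t \<Longrightarrow> \<forall>v\<in>V. wfV ar W (\<tau> v) \<Longrightarrow> econg ar E W (subst \<tau> s) (subst \<tau> t)"
proof (induction rule: econg.induct)
  case (ec_refl t)
  then have "wfV ar W (subst \<tau> t)" using wf_subst[of ar t V W \<tau>] by (simp add: wfV_def)
  then show ?case by (rule econg.ec_refl)
next
  case (ec_sym s t)
  then show ?case by (auto intro: econg.ec_sym)
next
  case (ec_trans s t u)
  then show ?case by (auto intro: econg.ec_trans)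
next
  case (ec_op ss f ts)
  then show ?case
    by (auto intro!: econg.ec_op simp: list_all2_map1 list_all2_map2 elim: list_all2_mono)
next
  case (ec_eq l r \<sigma>)
  have "\<forall>v. wfV ar W ((subst \<tau> \<circ> \<sigma>) v)"
  proof
    fix v
    have "wf ar (\<sigma> v)" "vars (\<sigma> v) \<subseteq> V" using ec_eq(2) by (auto simp: wfV_def)
    then show "wfV ar W ((subst \<tau> \<circ> \<sigma>) v)" using wf_subst[of ar "\<sigma> v" V W \<tau>] ec_eq(3) by simp
  qed
  then have "econg ar E W (subst (subst \<tau> \<circ> \<sigma>) l) (subst (subst \<tau> \<circ> \<sigma>) r)"
    by (rule econg.ec_eq[OF ec_eq(1)])
  then show ?case by (simp only: subst_subst)
qed

lemma cls_eq:
  assumes "econg ar E UNIV a b"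
  shows "cls ar E a = cls ar E b"
  using assms unfolding cls_def econg_rel_def
  by (auto intro: econg.ec_trans econg.ec_sym)

lemma rep_in: "x \<in> C \<Longrightarrow> rep C \<in> C"
  unfolding rep_def by (rule someI)

lemma TX_rep:
  assumes "algebraic_theory ar E" "C \<in> TX ar E"
  shows "wfV ar UNIV (rep C)"
proof -
  obtain s where s: "wfV ar UNIV s" "C = econg_rel ar E UNIV `` {s}"
    using assms(2) unfolding TX_def Ton_def quotient_def by auto
  then have "s \<in> C" by (auto simp: econg_rel_def intro: econg.ec_refl)
  then have "rep C \<in> C" by (rule rep_in)
  then show ?thesis using s econg_wfV[OF assms(1)] by (auto simp: econg_rel_def)
qed

lemma TX_rep_econg:
  assumes "C \<in> TX ar E" "x \<in> C"
  shows "econg ar E UNIV x (rep C)"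
proof -
  obtain s where s: "wfV ar UNIV s" "C = econg_rel ar E UNIV `` {s}"
    using assms(1) unfolding TX_def Ton_def quotient_def by auto
  have "rep C \<in> C" using assms(2) by (rule rep_in)
  then show ?thesis using s assms(2) by (auto simp: econg_rel_def intro: econg.ec_trans econg.ec_sym)
qed

theorem lemma8:
  fixes ar :: "'f \<Rightarrow> nat"
    and E :: "(('f,'v) trm \<times> ('f,'v) trm) set"
    and \<alpha> :: "('f,'x) trm set \<Rightarrow> 'x"
  assumes "algebraic_theory ar E"
    and "semialgebra ar E \<alpha>"
    and "length Cs = ar f"
    and "set Cs \<subseteq> TX ar E"
  shows "\<alpha> (opT ar E f Cs) = \<alpha> (opT ar E f (map (eta ar E \<circ> \<alpha>) Cs))"
proof -
  define t :: "('f, ('f,'x) trm set) trm" where "t = Op f (map Var Cs)"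
  define K where "K = econg_rel ar E (TX ar E) `` {t}"
  have wt: "wfV ar (TX ar E) t"
    using assms(3,4) by (auto simp: t_def wfV_def intro!: wf.wf_Op wf.wf_Var)
  have KT: "K \<in> Ton ar E (TX ar E)"
    using wt unfolding K_def Ton_def quotient_def by auto
  have "t \<in> K" using wt by (auto simp: K_def econg_rel_def intro: econg.ec_refl)
  then have "rep K \<in> K" by (rule rep_in)
  then have tK: "econg ar E (TX ar E) t (rep K)" by (simp add: K_def econg_rel_def)
  have r1: "\<forall>v\<in>TX ar E. wfV ar UNIV (rep v)" using TX_rep[OF assms(1)] by blast
  have r2: "\<forall>v\<in>TX ar E. wfV ar UNIV ((Var \<circ> \<alpha>) v)" by (auto simp: wfV_def intro: wf.wf_Var)
  have "mu ar E K = cls ar E (subst rep t)"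
    unfolding mu_def by (rule cls_eq[OF econg.ec_sym[OF econg_subst[OF tK r1]]])
  also have "\<dots> = opT ar E f Cs" by (simp add: t_def opT_def comp_def)
  finally have m: "mu ar E K = opT ar E f Cs" .
  have "Tmap ar E \<alpha> K = cls ar E (subst (Var \<circ> \<alpha>) t)"
    unfolding Tmap_def by (rule cls_eq[OF econg.ec_sym[OF econg_subst[OF tK r2]]])
  also have "\<dots> = cls ar E (Op f (map (Var \<circ> \<alpha>) Cs))" by (simp add: t_def comp_def)
  also have "\<dots> = opT ar E f (map (eta ar E \<circ> \<alpha>) Cs)"
    unfolding opT_def
  proof (rule cls_eq, rule econg.ec_op)
    show "length (map (Var \<circ> \<alpha>) Cs) = ar f" using assms(3) by simp
    have "econg ar E UNIV (Var x) (rep (eta ar E x))" for x :: 'x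
    proof -
      have wv: "wfV ar UNIV (Var x :: ('f,'x) trm)" by (auto simp: wfV_def intro: wf.wf_Var)
      have "eta ar E x \<in> TX ar E"
        using wv unfolding eta_def cls_def TX_def Ton_def quotient_def by auto
      moreover have "Var x \<in> eta ar E x"
        using wv by (auto simp: eta_def cls_def econg_rel_def intro: econg.ec_refl)
      ultimately show ?thesis by (rule TX_rep_econg)
    qed
    then show "list_all2 (econg ar E UNIV) (map (Var \<circ> \<alpha>) Cs) (map rep (map (eta ar E \<circ> \<alpha>) Cs))"
      by (auto simp: list_all2_map1 list_all2_map2 intro!: list_all2_refl)
  qed
  finally have tm: "Tmap ar E \<alpha> K = opT ar E f (map (eta ar E \<circ> \<alpha>) Cs)" .
  show ?thesis using assms(2) KT m tm unfolding semialgebra_def by metis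
qed

end
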